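(* In the between-ride routing problem described in the context (with the standing assumptions there), there exists an optimal stationary policy $\mu^*$ such that (i) for every $i\in N$, $\mu^*_1(i)=i$ implies $\mu^*_2(i)=\infty$, and (ii) $\mu^*$ has no cycles with probability 1: for every starting node, every $i\in N$ and all distinct stages $k\neq k'$, $\mathbb{P}(x_k=i,\,x_{k'}=i)=0$. Equivalently, the successor map $i\mapsto \mu^*_1(i)$ on $N$ has no directed cycle through two or more distinct nodes, and every self-loop of it is an indefinite wait. In particular, under $\mu^*$ every node is visited at most once, so the process reaches $m$ within at most $n$ decision stages (counting a final indefinite wait or quit as a stage).
   Context: Road network: a directed, connected graph $G=(N,E)$ with $|N|=n$, containing every loop $(i,i)$, $i\in N$. Constants: wage rate $w>0$ and fuel/vehicle cost per unit distance $f>0$. Each edge $e\in E$ has a ride-request rate $Q_e>0$ and expected ride profit $R_e>0$; each non-loop edge $e=(i,j)$, $j\neq i$, has a traversal time $T_e>0$ and speed $S_e>0$; loops have $S_{(i,i)}=0$. Markov decision problem: the state space is $X=N\cup\{m\}$, where $m$ is an absorbing terminal state (ride found or driver quits) with zero reward. At $i\in N$ an action is a pair $u=(u_1,u_2)$ with $u_1\in\{j:(i,j)\in E\}\cup\{m\}$; if $u_1=i$ (waiting) then $u_2=t\in(0,\infty]$ is freely chosen; if $u_1=j\neq i$ then $u_2=t=T_{(i,j)}$. For $u_1=j\in N$ and $e=(i,j)$: the next state is $m$ with probability $1-e^{-tQ_e}$ and $j$ with probability $e^{-tQ_e}$, and the expected stage reward is $g(i,u)=(1-e^{-tQ_e})\bigl(R_e-\frac{w+fS_e}{Q_e}\bigr)$;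 for $t=\infty$ these quantities are defined as the limits as $t\to\infty$ (so waiting forever at $i$ yields reward $R_{(i,i)}-w/Q_{(i,i)}$ and moves to $m$ with probability 1). For $u_1=m$ (quitting) the next state is $m$ with probability 1 and the reward is $0$. A policy prescribes an action for each state at each stage; it is stationary if the same map $\mu:i\mapsto(\mu_1(i),\mu_2(i))$ is used at every stage. The value of a policy $\pi$ from $x_0$ is $J_\pi(x_0)=\lim_{K\to\infty}\mathbb{E}\bigl[\sum_{k=0}^{K-1} g(x_k,\pi_k(x_k))\bigr]$; a policy is optimal if it attains $J^*(x)=\sup_\pi J_\pi(x)$ for every $x\in N$. $x_k$ denotes the state at stage $k$. Standing assumption: for every non-loop edge $e=(j,k)$, $R_e-\frac{w}{Q_e}\le\max_{i\in\{j,k\}}\bigl\{R_{(i,i)}-\frac{w}{Q_{(i,i)}}\bigr\}$. *)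

theory Defs
  imports "HOL-Analysis.Analysis"
begin

text \<open>Actions at a node i: Quit (move to the terminal state m), or Move j t
  meaning u_1 = j and u_2 = t (t = \<infinity> allowed only for waiting, j = i).\<close>
datatype 'a act = Quit | Move 'a ereal

type_synonym 'a policy = "nat \<Rightarrow> 'a \<Rightarrow> 'a act"

definition admissible :: "('a \<times> 'a) set \<Rightarrow> ('a \<times> 'a \<Rightarrow> real) \<Rightarrow> 'a \<Rightarrow> 'a act \<Rightarrow> bool" where
  "admissible E T i u \<longleftrightarrow>
     (case u of Quit \<Rightarrow> True
      | Move j t \<Rightarrow> (i, j) \<in> E \<and> (if j = i then 0 < t else t = ereal (T (i, j))))"

text \<open>Probability of moving to node u_1 (not to m).\<close>
definition stay_prob :: "('a \<times> 'a \<Rightarrow> real) \<Rightarrow> 'a \<Rightarrow> 'a act \<Rightarrow> real" where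
  "stay_prob Q i u =
     (case u of Quit \<Rightarrow> 0
      | Move j t \<Rightarrow> (case t of ereal r \<Rightarrow> exp (- r * Q (i, j)) | _ \<Rightarrow> 0))"

text \<open>Expected stage reward g(i,u); for t = \<infinity> the limit value.\<close>
definition stage_reward :: "real \<Rightarrow> real \<Rightarrow> ('a \<times> 'a \<Rightarrow> real) \<Rightarrow> ('a \<times> 'a \<Rightarrow> real)
    \<Rightarrow> ('a \<times> 'a \<Rightarrow> real) \<Rightarrow> 'a \<Rightarrow> 'a act \<Rightarrow> real" where
  "stage_reward w f Q R S i u =
     (case u of Quit \<Rightarrow> 0
      | Move j t \<Rightarrow> (case t of
           ereal r \<Rightarrow> (1 - exp (- r * Q (i, j))) * (R (i, j) - (w + f * S (i, j)) / Q (i, j))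
         | _ \<Rightarrow> R (i, j) - (w + f * S (i, j)) / Q (i, j)))"

text \<open>Under a (Markov, deterministic) policy the node sequence is deterministic as
  long as the process has not been absorbed in m; node_seq gives that sequence and
  surv the probability of not yet being in m.\<close>
fun node_seq :: "'a policy \<Rightarrow> 'a \<Rightarrow> nat \<Rightarrow> 'a" where
  "node_seq \<pi> x0 0 = x0"
| "node_seq \<pi> x0 (Suc k) =
     (case \<pi> k (node_seq \<pi> x0 k) of Quit \<Rightarrow> node_seq \<pi> x0 k | Move j t \<Rightarrow> j)"

definition surv :: "('a \<times> 'a \<Rightarrow> real) \<Rightarrow> 'a policy \<Rightarrow> 'a \<Rightarrow> nat \<Rightarrow> real" where
  "surv Q \<pi> x0 k = (\<Prod>l<k. stay_prob Q (node_seq \<pi> x0 l) (\<pi> l (node_seq \<pi> x0 l)))"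

text \<open>P(x_k = i \<and> x_k' = i) for the process started at x0.\<close>
definition joint_prob :: "('a \<times> 'a \<Rightarrow> real) \<Rightarrow> 'a policy \<Rightarrow> 'a \<Rightarrow> 'a \<Rightarrow> nat \<Rightarrow> nat \<Rightarrow> real" where
  "joint_prob Q \<pi> x0 i k k' =
     (if node_seq \<pi> x0 k = i \<and> node_seq \<pi> x0 k' = i then surv Q \<pi> x0 (max k k') else 0)"

text \<open>J_\<pi>(x0) = lim_K E[sum_{k<K} g(x_k, \<pi>_k(x_k))].\<close>
definition policy_value :: "real \<Rightarrow> real \<Rightarrow> ('a \<times> 'a \<Rightarrow> real) \<Rightarrow> ('a \<times> 'a \<Rightarrow> real)
    \<Rightarrow> ('a \<times> 'a \<Rightarrow> real) \<Rightarrow> 'a policy \<Rightarrow> 'a \<Rightarrow> real" where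
  "policy_value w f Q R S \<pi> x0 =
     lim (\<lambda>K. \<Sum>k<K. surv Q \<pi> x0 k *
                 stage_reward w f Q R S (node_seq \<pi> x0 k) (\<pi> k (node_seq \<pi> x0 k)))"

end

theory Submission
  imports Defs
begin


definition nxt :: "'a \<Rightarrow> 'a act \<Rightarrow> 'a" where
  "nxt i u = (case u of Quit \<Rightarrow> i | Move j t \<Rightarrow> j)"

definition psum :: "real \<Rightarrow> real \<Rightarrow> ('a \<times> 'a \<Rightarrow> real) \<Rightarrow> ('a \<times> 'a \<Rightarrow> real)
    \<Rightarrow> ('a \<times> 'a \<Rightarrow> real) \<Rightarrow> 'a policy \<Rightarrow> 'a \<Rightarrow> nat \<Rightarrow> real" where
  "psum w f Q R S \<pi> x0 K = (\<Sum>k<K. surv Q \<pi> x0 k *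
                 stage_reward w f Q R S (node_seq \<pi> x0 k) (\<pi> k (node_seq \<pi> x0 k)))"

lemma node_seq_Suc': "node_seq \<pi> x (Suc k) = nxt (node_seq \<pi> x k) (\<pi> k (node_seq \<pi> x k))"
  by (simp add: nxt_def split: act.split)

lemma surv_0[simp]: "surv Q \<pi> x 0 = 1" by (simp add: surv_def)

lemma surv_Suc: "surv Q \<pi> x (Suc k) = surv Q \<pi> x k * stay_prob Q (node_seq \<pi> x k) (\<pi> k (node_seq \<pi> x k))"
  by (simp add: surv_def)

lemma stay_prob_nonneg: "stay_prob Q i u \<ge> 0"
  by (auto simp: stay_prob_def split: act.split ereal.split)

lemma surv_nonneg: "surv Q \<pi> x k \<ge> 0"
  unfolding surv_def by (intro prod_nonneg) (auto intro: stay_prob_nonneg)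

lemma psum_Suc: "psum w f Q R S \<pi> x (Suc K) = psum w f Q R S \<pi> x K +
   surv Q \<pi> x K * stage_reward w f Q R S (node_seq \<pi> x K) (\<pi> K (node_seq \<pi> x K))"
  by (simp add: psum_def)

lemma telescope:
  "psum w f Q R S \<pi> x K + surv Q \<pi> x K * W (node_seq \<pi> x K) =
   W x + (\<Sum>k<K. surv Q \<pi> x k * (stage_reward w f Q R S (node_seq \<pi> x k) (\<pi> k (node_seq \<pi> x k))
      + stay_prob Q (node_seq \<pi> x k) (\<pi> k (node_seq \<pi> x k)) * W (nxt (node_seq \<pi> x k) (\<pi> k (node_seq \<pi> x k)))
      - W (node_seq \<pi> x k)))"
proof (induction K)
  case 0 then show ?case by (simp add: psum_def)
next
  case (Suc K)
  have e: "W (node_seq \<pi> x (Suc K)) = W (nxt (node_seq \<pi> x K) (\<pi> K (node_seq \<pi> x K)))"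
    by (rule arg_cong[where f=W], rule node_seq_Suc')
  show ?case unfolding psum_Suc surv_Suc e sum.lessThan_Suc using Suc.IH by (simp add: algebra_simps del: node_seq.simps)
qed

lemma g_simps:
  "stage_reward w f Q R S i Quit = 0"
  "stay_prob Q i Quit = 0"
  "stage_reward w f Q R S i (Move j (ereal r)) = (1 - exp (- r * Q (i, j))) * (R (i, j) - (w + f * S (i, j)) / Q (i, j))"
  "stay_prob Q i (Move j (ereal r)) = exp (- r * Q (i, j))"
  "stage_reward w f Q R S i (Move j \<infinity>) = R (i, j) - (w + f * S (i, j)) / Q (i, j)"
  "stay_prob Q i (Move j \<infinity>) = 0"
  by (simp_all add: stage_reward_def stay_prob_def)

lemma nxt_simps[simp]: "nxt i Quit = i" "nxt i (Move j t) = j" by (simp_all add: nxt_def)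



locale routing =
  fixes N :: "'a set" and E :: "('a \<times> 'a) set"
    and w f :: real and Q R T S :: "'a \<times> 'a \<Rightarrow> real"
  assumes finN: "finite N"
    and E_sub: "E \<subseteq> N \<times> N"
    and loops: "\<forall>i\<in>N. (i, i) \<in> E"
    and w_pos: "w > 0" and f_pos: "f > 0"
    and Q_pos: "\<forall>e\<in>E. Q e > 0"
    and T_pos: "\<forall>(i, j)\<in>E. i \<noteq> j \<longrightarrow> T (i, j) > 0"
    and S_pos: "\<forall>(i, j)\<in>E. i \<noteq> j \<longrightarrow> S (i, j) > 0"
    and S_loop: "\<forall>i\<in>N. S (i, i) = 0"
    and standing: "\<forall>(j, k)\<in>E. j \<noteq> k \<longrightarrow>
          R (j, k) - w / Q (j, k) \<le> max (R (j, j) - w / Q (j, j)) (R (k, k) - w / Q (k, k))"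
begin

definition adm :: "'a policy \<Rightarrow> bool" where
  "adm \<pi> \<longleftrightarrow> (\<forall>k. \<forall>i\<in>N. admissible E T i (\<pi> k i))"

definition cc :: "'a \<times> 'a \<Rightarrow> real" where
  "cc e = R e - (w + f * S e) / Q e"

definition CC :: real where "CC = (\<Sum>e\<in>N\<times>N. \<bar>cc e\<bar>)"

lemma nxt_in_N: "i \<in> N \<Longrightarrow> admissible E T i u \<Longrightarrow> nxt i u \<in> N"
  using E_sub by (auto simp: admissible_def split: act.splits)

lemma path_in_N: "adm \<pi> \<Longrightarrow> x \<in> N \<Longrightarrow> node_seq \<pi> x k \<in> N"
proof (induction k)
  case 0 then show ?case by simp
next
  case (Suc k)
  then show ?case unfolding node_seq_Suc' using nxt_in_N adm_def by blast
qed

lemma adm_cases: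
  assumes "i \<in> N" "admissible E T i u"
  obtains "u = Quit"
  | r where "u = Move i (ereal r)" "r > 0"
  | "u = Move i \<infinity>"
  | j where "u = Move j (ereal (T (i, j)))" "j \<noteq> i" "(i, j) \<in> E" "T (i, j) > 0" "j \<in> N"
proof (cases u)
  case Quit then show ?thesis using that by auto
next
  case (Move j t)
  show ?thesis
  proof (cases "j = i")
    case True
    then show ?thesis using Move assms that by (cases t) (auto simp: admissible_def)
  next
    case False
    then show ?thesis using Move assms that T_pos E_sub by (auto simp: admissible_def)
  qed
qed

lemma stay_le1: assumes "i \<in> N" "admissible E T i u" shows "stay_prob Q i u \<le> 1"
  using assms
proof (cases rule: adm_cases)
  case (2 r)
  have "Q (i, i) > 0" using Q_pos loops assms by auto
  then show ?thesis using 2 by (simp add: g_simps)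
next
  case (4 j)
  have "Q (i, j) > 0" using Q_pos 4 by auto
  then show ?thesis using 4 by (simp add: g_simps)
qed (auto simp: g_simps)

lemma cc_le: "e \<in> N \<times> N \<Longrightarrow> \<bar>cc e\<bar> \<le> CC"
  unfolding CC_def by (rule member_le_sum) (auto simp: finN)

lemma CC_nonneg: "CC \<ge> 0" unfolding CC_def by (simp add: sum_nonneg)

lemma term_bound:
  assumes "i \<in> N" "admissible E T i u" "s \<ge> 0"
  shows "\<bar>s * stage_reward w f Q R S i u\<bar> \<le> CC * (s - s * stay_prob Q i u)"
  using assms(1,2)
proof (cases rule: adm_cases)
  case 1 then show ?thesis using assms CC_nonneg by (simp add: g_simps)
next
  case (2 r)
  have le: "stay_prob Q i u \<le> 1" using stay_le1 assms by blast
  have "\<bar>cc (i,i)\<bar> \<le> CC" using cc_le assms by auto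
  hence "\<bar>cc (i,i)\<bar> * (s - s * stay_prob Q i u) \<le> CC * (s - s * stay_prob Q i u)"
    using le assms by (intro mult_right_mono) (auto simp: mult_left_le)
  moreover have "\<bar>s * stage_reward w f Q R S i u\<bar> = \<bar>cc (i,i)\<bar> * (s - s * stay_prob Q i u)"
  proof -
    have "s * stage_reward w f Q R S i u = (s - s * stay_prob Q i u) * cc (i,i)"
      using 2 by (simp add: g_simps cc_def algebra_simps)
    moreover have "s - s * stay_prob Q i u \<ge> 0" using le assms(3) by (simp add: mult_left_le)
    ultimately show ?thesis by (simp add: abs_mult)
  qed
  ultimately show ?thesis by simp
next
  case 3
  have "\<bar>cc (i,i)\<bar> \<le> CC" using cc_le assms by auto
  then show ?thesis using 3 assms by (simp add: g_simps cc_def abs_mult mult_right_mono mult.commute[of s])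
next
  case (4 j)
  have le: "stay_prob Q i u \<le> 1" using stay_le1 assms by blast
  have "\<bar>cc (i,j)\<bar> \<le> CC" using cc_le assms 4 by auto
  hence "\<bar>cc (i,j)\<bar> * (s - s * stay_prob Q i u) \<le> CC * (s - s * stay_prob Q i u)"
    using le assms by (intro mult_right_mono) (auto simp: mult_left_le)
  moreover have "\<bar>s * stage_reward w f Q R S i u\<bar> = \<bar>cc (i,j)\<bar> * (s - s * stay_prob Q i u)"
  proof -
    have "s * stage_reward w f Q R S i u = (s - s * stay_prob Q i u) * cc (i,j)"
      using 4 Q_pos by (simp add: g_simps cc_def field_simps)
    moreover have "s - s * stay_prob Q i u \<ge> 0" using le assms(3) by (simp add: mult_left_le)
    ultimately show ?thesis by (simp add: abs_mult)
  qed
  ultimately show ?thesis by simp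
qed

lemma summable_terms:
  assumes "adm \<pi>" "x \<in> N"
  shows "summable (\<lambda>k. surv Q \<pi> x k * stage_reward w f Q R S (node_seq \<pi> x k) (\<pi> k (node_seq \<pi> x k)))"
proof -
  have dec: "decseq (surv Q \<pi> x)"
    unfolding decseq_Suc_iff
  proof
    fix k
    have "stay_prob Q (node_seq \<pi> x k) (\<pi> k (node_seq \<pi> x k)) \<le> 1"
      using stay_le1 path_in_N assms adm_def by blast
    then show "surv Q \<pi> x (Suc k) \<le> surv Q \<pi> x k"
      unfolding surv_Suc using surv_nonneg[of Q \<pi> x k] by (simp add: mult_left_le)
  qed
  have "\<forall>i. 0 \<le> surv Q \<pi> x i" by (simp add: surv_nonneg)
  then obtain L where L: "surv Q \<pi> x \<longlonglongrightarrow> L"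
    using decseq_convergent[OF dec] by blast
  have "summable (\<lambda>k. surv Q \<pi> x k - surv Q \<pi> x (Suc k))"
    by (rule telescope_summable'[OF L])
  hence s: "summable (\<lambda>k. CC * (surv Q \<pi> x k - surv Q \<pi> x (Suc k)))"
    by (rule summable_mult)
  show ?thesis
  proof (rule summable_comparison_test[OF _ s], intro exI allI impI)
    fix k
    have "node_seq \<pi> x k \<in> N" using path_in_N assms by blast
    moreover have "admissible E T (node_seq \<pi> x k) (\<pi> k (node_seq \<pi> x k))"
      using assms calculation adm_def by blast
    ultimately have "\<bar>surv Q \<pi> x k * stage_reward w f Q R S (node_seq \<pi> x k) (\<pi> k (node_seq \<pi> x k))\<bar>
      \<le> CC * (surv Q \<pi> x k - surv Q \<pi> x k * stay_prob Q (node_seq \<pi> x k) (\<pi> k (node_seq \<pi> x k)))"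
      by (rule term_bound[OF _ _ surv_nonneg])
    then show "norm (surv Q \<pi> x k * stage_reward w f Q R S (node_seq \<pi> x k) (\<pi> k (node_seq \<pi> x k)))
      \<le> CC * (surv Q \<pi> x k - surv Q \<pi> x (Suc k))"
      by (simp only: surv_Suc real_norm_def)
  qed
qed

end


context routing begin

lemma pv_psum: "policy_value w f Q R S \<pi> x = lim (psum w f Q R S \<pi> x)"
  unfolding policy_value_def psum_def by simp

lemma pv_le:
  assumes "adm \<pi>" "x \<in> N" "\<And>K. psum w f Q R S \<pi> x K \<le> B"
  shows "policy_value w f Q R S \<pi> x \<le> B"
proof -
  note sm = summable_terms[OF assms(1,2)]
  have "lim (psum w f Q R S \<pi> x) = suminf (\<lambda>k. surv Q \<pi> x k * stage_reward w f Q R S (node_seq \<pi> x k) (\<pi> k (node_seq \<pi> x k)))"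
    unfolding psum_def by (rule limI[OF summable_LIMSEQ[OF sm]])
  also have "\<dots> \<le> B" using assms(3) unfolding psum_def by (intro suminf_le_const[OF sm])
  finally show ?thesis by (simp add: pv_psum)
qed

definition good :: "('a \<Rightarrow> 'a act) \<Rightarrow> bool" where
 "good \<mu> \<longleftrightarrow> (\<forall>i\<in>N. admissible E T i (\<mu> i)) \<and> (\<forall>i\<in>N. \<forall>t. \<mu> i = Move i t \<longrightarrow> t = \<infinity>) \<and>
    (\<exists>\<rho>::'a\<Rightarrow>real. \<forall>i\<in>N. \<forall>j t. \<mu> i = Move j t \<longrightarrow> j \<noteq> i \<longrightarrow> \<rho> i < \<rho> j)"

lemma good_adm: "good \<mu> \<Longrightarrow> adm (\<lambda>_. \<mu>)" by (simp add: good_def adm_def)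

lemma stay_nz:
  assumes "good \<mu>" "i \<in> N" "stay_prob Q i (\<mu> i) \<noteq> 0"
  shows "\<exists>j t. \<mu> i = Move j t \<and> j \<noteq> i"
proof (cases "\<mu> i")
  case Quit then show ?thesis using assms by (simp add: g_simps)
next
  case (Move j t)
  show ?thesis
  proof (cases "j = i")
    case True
    then have "t = \<infinity>" using assms Move by (auto simp: good_def)
    then show ?thesis using assms Move True by (simp add: g_simps)
  qed (use Move in auto)
qed

lemma surv_factor_nz:
  assumes "surv Q \<pi> x K \<noteq> 0" "l < K"
  shows "stay_prob Q (node_seq \<pi> x l) (\<pi> l (node_seq \<pi> x l)) \<noteq> 0"
  using assms unfolding surv_def by auto

lemma surv_zero_mono:
  assumes "surv Q \<pi> x K = 0" "K \<le> K'"
  shows "surv Q \<pi> x K' = 0"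
  using assms unfolding surv_def by auto

lemma path_mono:
  fixes \<rho> :: "'a \<Rightarrow> real"
  assumes g: "good \<mu>" and rho: "\<forall>i\<in>N. \<forall>j t. \<mu> i = Move j t \<longrightarrow> j \<noteq> i \<longrightarrow> \<rho> i < \<rho> j"
    and x: "x \<in> N" and nz: "surv Q (\<lambda>_. \<mu>) x K \<noteq> 0"
  shows "a < b \<Longrightarrow> b \<le> K \<Longrightarrow> \<rho> (node_seq (\<lambda>_. \<mu>) x a) < \<rho> (node_seq (\<lambda>_. \<mu>) x b)"
proof (induction b)
  case 0 then show ?case by simp
next
  case (Suc b)
  let ?x = "node_seq (\<lambda>_. \<mu>) x"
  have inN: "?x b \<in> N" using path_in_N[OF good_adm[OF g] x] .
  have "stay_prob Q (?x b) (\<mu> (?x b)) \<noteq> 0" using surv_factor_nz[OF nz, of b] Suc.prems by simp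
  then obtain j t where jt: "\<mu> (?x b) = Move j t" "j \<noteq> ?x b" using stay_nz[OF g inN] by blast
  have "?x (Suc b) = j" using jt by (simp add: node_seq_Suc')
  hence step: "\<rho> (?x b) < \<rho> (?x (Suc b))" using rho inN jt by auto
  show ?case
  proof (cases "a = b")
    case True then show ?thesis using step by simp
  next
    case False
    then have "\<rho> (?x a) < \<rho> (?x b)" using Suc by simp
    then show ?thesis using step by (rule less_trans)
  qed
qed

lemma good_surv_n:
  assumes g: "good \<mu>" and x: "x \<in> N"
  shows "surv Q (\<lambda>_. \<mu>) x (card N) = 0"
proof (rule ccontr)
  assume nz: "surv Q (\<lambda>_. \<mu>) x (card N) \<noteq> 0"
  obtain \<rho> :: "'a \<Rightarrow> real" where rho: "\<forall>i\<in>N. \<forall>j t. \<mu> i = Move j t \<longrightarrow> j \<noteq> i \<longrightarrow> \<rho> i < \<rho> j"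
    using g unfolding good_def by blast
  let ?x = "node_seq (\<lambda>_. \<mu>) x"
  have inj: "inj_on ?x {..card N}"
  proof (rule inj_onI)
    fix a b assume ab: "a \<in> {..card N}" "b \<in> {..card N}" "?x a = ?x b"
    show "a = b"
    proof (rule ccontr)
      assume "a \<noteq> b"
      then consider "a < b" | "b < a" by linarith
      then show False
      proof cases
        case 1 then show False using path_mono[OF g rho x nz 1] ab by simp
      next
        case 2 then show False using path_mono[OF g rho x nz 2] ab by simp
      qed
    qed
  qed
  have "?x ` {..card N} \<subseteq> N" using path_in_N[OF good_adm[OF g] x] by auto
  from card_inj_on_le[OF inj this finN] show False by simp
qed

lemma psum_const:
  assumes g: "good \<mu>" and x: "x \<in> N"
  shows "K \<ge> card N \<Longrightarrow> psum w f Q R S (\<lambda>_. \<mu>) x K = psum w f Q R S (\<lambda>_. \<mu>) x (card N)"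
proof (induction K rule: dec_induct)
  case base then show ?case by simp
next
  case (step K)
  have "surv Q (\<lambda>_. \<mu>) x K = 0" using surv_zero_mono[OF good_surv_n[OF g x] step(1)] .
  then show ?case using step by (simp add: psum_Suc)
qed

lemma good_val:
  assumes g: "good \<mu>" and x: "x \<in> N"
  shows "policy_value w f Q R S (\<lambda>_. \<mu>) x = psum w f Q R S (\<lambda>_. \<mu>) x (card N)"
proof -
  have "eventually (\<lambda>K. psum w f Q R S (\<lambda>_. \<mu>) x K = psum w f Q R S (\<lambda>_. \<mu>) x (card N)) sequentially"
    using psum_const[OF g x] eventually_sequentially by blast
  then have "psum w f Q R S (\<lambda>_. \<mu>) x \<longlonglongrightarrow> psum w f Q R S (\<lambda>_. \<mu>) x (card N)"
    by (rule tendsto_eventually)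
  then show ?thesis by (simp add: pv_psum limI)
qed

lemma ns_shift: "node_seq (\<lambda>_. \<mu>) x (Suc k) = node_seq (\<lambda>_. \<mu>) (nxt x (\<mu> x)) k"
proof (induction k)
  case 0 then show ?case by (simp only: node_seq_Suc' node_seq.simps(1))
next
  case (Suc k)
  have "node_seq (\<lambda>_. \<mu>) x (Suc (Suc k)) = nxt (node_seq (\<lambda>_. \<mu>) x (Suc k)) (\<mu> (node_seq (\<lambda>_. \<mu>) x (Suc k)))"
    by (rule node_seq_Suc')
  also have "\<dots> = nxt (node_seq (\<lambda>_. \<mu>) (nxt x (\<mu> x)) k) (\<mu> (node_seq (\<lambda>_. \<mu>) (nxt x (\<mu> x)) k))"
    by (simp only: Suc)
  also have "\<dots> = node_seq (\<lambda>_. \<mu>) (nxt x (\<mu> x)) (Suc k)" by (rule node_seq_Suc'[symmetric])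
  finally show ?case .
qed

lemma surv_shift: "surv Q (\<lambda>_. \<mu>) x (Suc k) = stay_prob Q x (\<mu> x) * surv Q (\<lambda>_. \<mu>) (nxt x (\<mu> x)) k"
  unfolding surv_def prod.lessThan_Suc_shift ns_shift by simp

lemma psum_shift: "psum w f Q R S (\<lambda>_. \<mu>) x (Suc K) = stage_reward w f Q R S x (\<mu> x)
    + stay_prob Q x (\<mu> x) * psum w f Q R S (\<lambda>_. \<mu>) (nxt x (\<mu> x)) K"
  unfolding psum_def sum.lessThan_Suc_shift surv_shift ns_shift
  by (simp add: sum_distrib_left mult.assoc del: node_seq.simps(2))

lemma good_bellman:
  assumes g: "good \<mu>" and x: "x \<in> N"
  shows "policy_value w f Q R S (\<lambda>_. \<mu>) x = stage_reward w f Q R S x (\<mu> x)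
    + stay_prob Q x (\<mu> x) * policy_value w f Q R S (\<lambda>_. \<mu>) (nxt x (\<mu> x))"
proof -
  have y: "nxt x (\<mu> x) \<in> N" using nxt_in_N x g by (auto simp: good_def)
  have "policy_value w f Q R S (\<lambda>_. \<mu>) x = psum w f Q R S (\<lambda>_. \<mu>) x (Suc (card N))"
    using good_val[OF g x] psum_const[OF g x, of "Suc (card N)"] by simp
  then show ?thesis by (simp add: psum_shift good_val[OF g y])
qed

lemma improve:
  assumes g: "good \<mu>"
    and W: "\<forall>x\<in>N. W x \<le> stage_reward w f Q R S x (\<mu> x) + stay_prob Q x (\<mu> x) * W (nxt x (\<mu> x))"
    and x: "x \<in> N"
  shows "W x \<le> policy_value w f Q R S (\<lambda>_. \<mu>) x"
proof -
  let ?x = "node_seq (\<lambda>_. \<mu>) x"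
  have "0 \<le> (\<Sum>k<card N. surv Q (\<lambda>_. \<mu>) x k * (stage_reward w f Q R S (?x k) (\<mu> (?x k))
      + stay_prob Q (?x k) (\<mu> (?x k)) * W (nxt (?x k) (\<mu> (?x k))) - W (?x k)))"
  proof (intro sum_nonneg mult_nonneg_nonneg surv_nonneg)
    fix k
    have "?x k \<in> N" using path_in_N[OF good_adm[OF g] x] .
    then show "0 \<le> stage_reward w f Q R S (?x k) (\<mu> (?x k))
      + stay_prob Q (?x k) (\<mu> (?x k)) * W (nxt (?x k) (\<mu> (?x k))) - W (?x k)" using W by auto
  qed
  moreover have "psum w f Q R S (\<lambda>_. \<mu>) x (card N) + surv Q (\<lambda>_. \<mu>) x (card N) * W (?x (card N)) =
     W x + (\<Sum>k<card N. surv Q (\<lambda>_. \<mu>) x k * (stage_reward w f Q R S (?x k) (\<mu> (?x k))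
      + stay_prob Q (?x k) (\<mu> (?x k)) * W (nxt (?x k) (\<mu> (?x k))) - W (?x k)))"
    by (rule telescope)
  ultimately show ?thesis using good_surv_n[OF g x] good_val[OF g x] by simp
qed

end


context routing begin

lemma good_upd:
  assumes g: "good \<mu>" and i: "i \<in> N" and adm: "admissible E T i u"
    and self: "\<forall>t. u = Move i t \<longrightarrow> t = \<infinity>"
    and nomove: "\<forall>j t. u = Move j t \<longrightarrow> j = i"
  shows "good (\<mu>(i := u))"
proof -
  obtain \<rho> :: "'a \<Rightarrow> real" where rho: "\<forall>i\<in>N. \<forall>j t. \<mu> i = Move j t \<longrightarrow> j \<noteq> i \<longrightarrow> \<rho> i < \<rho> j"
    using g unfolding good_def by blast
  have "\<forall>x\<in>N. \<forall>j t. (\<mu>(i := u)) x = Move j t \<longrightarrow> j \<noteq> x \<longrightarrow> \<rho> x < \<rho> j"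
    using rho nomove by auto
  then have h3: "\<exists>\<rho>::'a \<Rightarrow> real. \<forall>x\<in>N. \<forall>j t. (\<mu>(i := u)) x = Move j t \<longrightarrow> j \<noteq> x \<longrightarrow> \<rho> x < \<rho> j"
    by blast
  have h1: "\<forall>x\<in>N. admissible E T x ((\<mu>(i := u)) x)" using g adm unfolding good_def by auto
  have h2: "\<forall>x\<in>N. \<forall>t. (\<mu>(i := u)) x = Move x t \<longrightarrow> t = \<infinity>" using g self unfolding good_def by auto
  show ?thesis unfolding good_def using h1 h2 h3 by blast
qed

lemma main:
  "\<exists>\<mu>. good \<mu> \<and> (\<forall>\<pi>. adm \<pi> \<longrightarrow> (\<forall>x\<in>N. policy_value w f Q R S \<pi> x \<le> policy_value w f Q R S (\<lambda>_. \<mu>) x))"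
proof -
  define B where "B = insert Quit ((\<lambda>j. Move j \<infinity>) ` N \<union> (\<lambda>(i,j). Move j (ereal (T (i, j)))) ` (N \<times> N))"
  define P where "P = {\<mu>. (\<forall>x. (x \<in> N \<longrightarrow> \<mu> x \<in> B) \<and> (x \<notin> N \<longrightarrow> \<mu> x = Quit)) \<and> good \<mu>}"
  define \<Phi> where "\<Phi> \<mu> = (\<Sum>i\<in>N. policy_value w f Q R S (\<lambda>_. \<mu>) i)" for \<mu>
  have finB: "finite B" by (simp add: B_def finN)
  have finP: "finite P"
    by (rule finite_subset[OF _ finite_set_of_finite_funs[OF finN finB, of Quit]]) (auto simp: P_def)
  have q: "(\<lambda>_. Quit) \<in> P" unfolding P_def good_def B_def admissible_def by auto
  have "finite (\<Phi> ` P)" "\<Phi> ` P \<noteq> {}" using finP q by auto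
  then have "Max (\<Phi> ` P) \<in> \<Phi> ` P" by (rule Max_in)
  then obtain \<mu>s where mus: "\<mu>s \<in> P" "\<Phi> \<mu>s = Max (\<Phi> ` P)" by auto
  have max: "\<And>\<mu>. \<mu> \<in> P \<Longrightarrow> \<Phi> \<mu> \<le> \<Phi> \<mu>s"
    using mus(2) \<open>finite (\<Phi> ` P)\<close> by simp
  have gs: "good \<mu>s" using mus P_def by simp
  define V where "V = policy_value w f Q R S (\<lambda>_. \<mu>s)"
  have Vbell: "\<And>x. x \<in> N \<Longrightarrow> V x = stage_reward w f Q R S x (\<mu>s x) + stay_prob Q x (\<mu>s x) * V (nxt x (\<mu>s x))"
    unfolding V_def by (rule good_bellman[OF gs])
  have switch: "stage_reward w f Q R S i u + stay_prob Q i u * V (nxt i u) \<le> V i"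
    if i: "i \<in> N" and uB: "u \<in> B" and g': "good (\<mu>s(i := u))" for i u
  proof (rule ccontr)
    assume contra: "\<not> ?thesis"
    let ?\<mu> = "\<mu>s(i := u)"
    have inP: "?\<mu> \<in> P" using mus(1) i uB g' unfolding P_def by auto
    have W: "\<forall>x\<in>N. V x \<le> stage_reward w f Q R S x (?\<mu> x) + stay_prob Q x (?\<mu> x) * V (nxt x (?\<mu> x))"
      using contra Vbell by auto
    have le: "\<And>x. x \<in> N \<Longrightarrow> V x \<le> policy_value w f Q R S (\<lambda>_. ?\<mu>) x"
      using improve[OF g' W] .
    have adm_u: "admissible E T i u" using g' i unfolding good_def by (metis fun_upd_same)
    have y: "nxt i u \<in> N" using nxt_in_N[OF i adm_u] .
    have "policy_value w f Q R S (\<lambda>_. ?\<mu>) i = stage_reward w f Q R S i u + stay_prob Q i u * policy_value w f Q R S (\<lambda>_. ?\<mu>) (nxt i u)"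
      using good_bellman[OF g' i] by simp
    also have "\<dots> \<ge> stage_reward w f Q R S i u + stay_prob Q i u * V (nxt i u)"
      using mult_left_mono[OF le[OF y] stay_prob_nonneg[of Q i u]] by simp
    finally have gt: "V i < policy_value w f Q R S (\<lambda>_. ?\<mu>) i" using contra by simp
    have "\<Phi> \<mu>s < \<Phi> ?\<mu>" unfolding \<Phi>_def V_def[symmetric]
      by (rule sum_strict_mono_ex1[OF finN]) (use le gt i in auto)
    then show False using max[OF inP] by simp
  qed
  have A: "0 \<le> V i" if i: "i \<in> N" for i
  proof -
    have "good (\<mu>s(i := Quit))" by (rule good_upd[OF gs i]) (auto simp: admissible_def)
    from switch[OF i _ this] show ?thesis by (simp add: B_def g_simps)
  qed
  have Bv: "R (i, i) - w / Q (i, i) \<le> V i" if i: "i \<in> N" for i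
  proof -
    have "good (\<mu>s(i := Move i \<infinity>))" by (rule good_upd[OF gs i]) (use loops i in \<open>auto simp: admissible_def\<close>)
    from switch[OF i _ this] show ?thesis using i S_loop by (simp add: B_def g_simps)
  qed
  have ccmax: "cc (i, j) < max (V i) (V j)" if ij: "(i, j) \<in> E" "j \<noteq> i" for i j
  proof -
    have iN: "i \<in> N" and jN: "j \<in> N" using ij E_sub by auto
    have Qp: "Q (i, j) > 0" using Q_pos ij by auto
    have Sp: "S (i, j) > 0" using S_pos ij by auto
    have "f * S (i, j) / Q (i, j) > 0" using Qp Sp f_pos by simp
    moreover have "cc (i, j) = (R (i, j) - w / Q (i, j)) - f * S (i, j) / Q (i, j)"
      unfolding cc_def by (simp add: add_divide_distrib)
    moreover have "R (i, j) - w / Q (i, j) \<le> max (R (i, i) - w / Q (i, i)) (R (j, j) - w / Q (j, j))"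
      using standing ij by auto
    moreover have "max (R (i, i) - w / Q (i, i)) (R (j, j) - w / Q (j, j)) \<le> max (V i) (V j)"
      using Bv[OF iN] Bv[OF jN] by auto
    ultimately show ?thesis by linarith
  qed
  have C: "V i < V j" if i: "i \<in> N" and m: "\<mu>s i = Move j t" and ji: "j \<noteq> i" for i j t
  proof -
    have adm: "admissible E T i (\<mu>s i)" using gs i unfolding good_def by blast
    then have ij: "(i, j) \<in> E" and t: "t = ereal (T (i, j))" using m ji by (auto simp: admissible_def)
    have Qp: "Q (i, j) > 0" using Q_pos ij by auto
    have Tp: "T (i, j) > 0" using T_pos ij ji by auto
    define e where "e = exp (- T (i, j) * Q (i, j))"
    have e0: "0 < e" and e1: "e < 1" using Qp Tp unfolding e_def by auto
    have "V i = (1 - e) * cc (i, j) + e * V j"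
      using Vbell[OF i] m t by (simp add: g_simps cc_def e_def)
    moreover have "cc (i, j) < max (V i) (V j)" using ccmax ij ji by blast
    ultimately show ?thesis
    proof (cases "V j \<le> V i")
      case True
      assume Vi: "V i = (1 - e) * cc (i, j) + e * V j" and c: "cc (i, j) < max (V i) (V j)"
      have "(1 - e) * cc (i, j) < (1 - e) * V i" using c True e1 by (intro mult_strict_left_mono) auto
      moreover have "e * V j \<le> e * V i" using True e0 by (intro mult_left_mono) auto
      ultimately have "V i < (1 - e) * V i + e * V i" using Vi by linarith
      then show ?thesis by (simp add: algebra_simps)
    qed simp
  qed
  have D: "stage_reward w f Q R S i u + stay_prob Q i u * V (nxt i u) \<le> V i"
    if i: "i \<in> N" and adm: "admissible E T i u" for i u
    using i adm
  proof (cases rule: adm_cases)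
    case 1 then show ?thesis using A[OF i] by (simp add: g_simps)
  next
    case (2 r)
    define e where "e = exp (- r * Q (i, i))"
    have e1: "e \<le> 1" using stay_le1[OF i adm] 2 by (simp add: g_simps e_def)
    have e0: "e \<ge> 0" by (simp add: e_def)
    have "cc (i, i) = R (i, i) - w / Q (i, i)" using S_loop i by (simp add: cc_def)
    then have "(1 - e) * cc (i, i) \<le> (1 - e) * V i" using Bv[OF i] e1 by (intro mult_left_mono) auto
    moreover have "stage_reward w f Q R S i u = (1 - e) * cc (i, i)" using 2 by (simp add: g_simps cc_def e_def)
    moreover have "stay_prob Q i u = e" using 2 by (simp add: g_simps e_def)
    moreover have "nxt i u = i" using 2 by simp
    ultimately show ?thesis by (simp add: algebra_simps)
  next
    case 3
    then show ?thesis using Bv[OF i] S_loop i by (simp add: g_simps)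
  next
    case (4 j)
    show ?thesis
    proof (cases "V i < V j")
      case True
      have "good (\<mu>s(i := u))" unfolding good_def
      proof (intro conjI)
        show "\<forall>x\<in>N. admissible E T x ((\<mu>s(i := u)) x)" using gs adm unfolding good_def by auto
        show "\<forall>x\<in>N. \<forall>t. (\<mu>s(i := u)) x = Move x t \<longrightarrow> t = \<infinity>" using gs 4 unfolding good_def by auto
        show "\<exists>\<rho>::'a \<Rightarrow> real. \<forall>x\<in>N. \<forall>y t. (\<mu>s(i := u)) x = Move y t \<longrightarrow> y \<noteq> x \<longrightarrow> \<rho> x < \<rho> y"
          by (rule exI[of _ V]) (use C True 4 in auto)
      qed
      moreover have "u \<in> B" using 4 i unfolding B_def by auto
      ultimately show ?thesis using switch[OF i] by blast
    next
      case False
      have Qp: "Q (i, j) > 0" using Q_pos 4 by auto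
      define e where "e = exp (- T (i, j) * Q (i, j))"
      have e0: "0 \<le> e" and e1: "e \<le> 1" using Qp 4 unfolding e_def by auto
      have c: "cc (i, j) < V i" using ccmax[OF 4(3,2)] False by simp
      have "(1 - e) * cc (i, j) \<le> (1 - e) * V i" using c e1 by (intro mult_left_mono) auto
      moreover have "e * V j \<le> e * V i" using False e0 by (intro mult_left_mono) auto
      ultimately have "(1 - e) * cc (i, j) + e * V j \<le> V i" by (simp add: algebra_simps)
      then show ?thesis using 4 by (simp add: g_simps cc_def e_def)
    qed
  qed
  show ?thesis
  proof (intro exI conjI allI impI ballI)
    show "good \<mu>s" by (rule gs)
  next
    fix \<pi> x assume adm: "adm \<pi>" and x: "x \<in> N"
    show "policy_value w f Q R S \<pi> x \<le> policy_value w f Q R S (\<lambda>_. \<mu>s) x"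
      unfolding V_def[symmetric]
    proof (rule pv_le[OF adm x])
      fix K
      let ?x = "node_seq \<pi> x"
      have "(\<Sum>k<K. surv Q \<pi> x k * (stage_reward w f Q R S (?x k) (\<pi> k (?x k))
          + stay_prob Q (?x k) (\<pi> k (?x k)) * V (nxt (?x k) (\<pi> k (?x k))) - V (?x k))) \<le> 0"
      proof (intro sum_nonpos mult_nonneg_nonpos surv_nonneg)
        fix k
        have "?x k \<in> N" using path_in_N[OF adm x] .
        moreover have "admissible E T (?x k) (\<pi> k (?x k))" using adm calculation adm_def by blast
        ultimately show "stage_reward w f Q R S (?x k) (\<pi> k (?x k))
          + stay_prob Q (?x k) (\<pi> k (?x k)) * V (nxt (?x k) (\<pi> k (?x k))) - V (?x k) \<le> 0"
          using D by fastforce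
      qed
      moreover have "0 \<le> surv Q \<pi> x K * V (?x K)"
        by (rule mult_nonneg_nonneg[OF surv_nonneg A[OF path_in_N[OF adm x]]])
      moreover note telescope[of w f Q R S \<pi> x K V]
      ultimately show "psum w f Q R S \<pi> x K \<le> V x" by linarith
    qed
  qed
qed

lemma final:
  "\<exists>\<mu> :: 'a \<Rightarrow> 'a act.
     (\<forall>i\<in>N. admissible E T i (\<mu> i)) \<and>
     (\<forall>\<pi>. (\<forall>k. \<forall>i\<in>N. admissible E T i (\<pi> k i)) \<longrightarrow>
          (\<forall>x\<in>N. policy_value w f Q R S \<pi> x \<le> policy_value w f Q R S (\<lambda>_. \<mu>) x)) \<and>
     (\<forall>i\<in>N. \<forall>t. \<mu> i = Move i t \<longrightarrow> t = \<infinity>) \<and>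
     (\<forall>x0\<in>N. \<forall>i\<in>N. \<forall>k k'. k \<noteq> k' \<longrightarrow> joint_prob Q (\<lambda>_. \<mu>) x0 i k k' = 0) \<and>
     (\<forall>x0\<in>N. surv Q (\<lambda>_. \<mu>) x0 (card N) = 0)"
proof -
  obtain \<mu> where g: "good \<mu>"
    and opt: "\<forall>\<pi>. adm \<pi> \<longrightarrow> (\<forall>x\<in>N. policy_value w f Q R S \<pi> x \<le> policy_value w f Q R S (\<lambda>_. \<mu>) x)"
    using main by blast
  obtain \<rho> :: "'a \<Rightarrow> real" where rho: "\<forall>i\<in>N. \<forall>j t. \<mu> i = Move j t \<longrightarrow> j \<noteq> i \<longrightarrow> \<rho> i < \<rho> j"
    using g unfolding good_def by blast
  have joint: "joint_prob Q (\<lambda>_. \<mu>) x0 i k k' = 0" if x0: "x0 \<in> N" and kk: "k \<noteq> k'" for x0 i k k'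
  proof (cases "node_seq (\<lambda>_. \<mu>) x0 k = i \<and> node_seq (\<lambda>_. \<mu>) x0 k' = i")
    case True
    show ?thesis
    proof (rule ccontr)
      assume "joint_prob Q (\<lambda>_. \<mu>) x0 i k k' \<noteq> 0"
      then have nz: "surv Q (\<lambda>_. \<mu>) x0 (max k k') \<noteq> 0" using True by (simp add: joint_prob_def)
      consider "k < k'" | "k' < k" using kk by linarith
      then show False
      proof cases
        case 1 then show False using path_mono[OF g rho x0 nz 1] True by simp
      next
        case 2 then show False using path_mono[OF g rho x0 nz 2] True by simp
      qed
    qed
  next
    case False
    then show ?thesis unfolding joint_prob_def by (rule if_not_P)
  qed
  show ?thesis
  proof (intro exI conjI)
    show "\<forall>i\<in>N. admissible E T i (\<mu> i)" using g unfolding good_def by blast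
    show "\<forall>\<pi>. (\<forall>k. \<forall>i\<in>N. admissible E T i (\<pi> k i)) \<longrightarrow>
          (\<forall>x\<in>N. policy_value w f Q R S \<pi> x \<le> policy_value w f Q R S (\<lambda>_. \<mu>) x)"
      using opt unfolding adm_def by blast
    show "\<forall>i\<in>N. \<forall>t. \<mu> i = Move i t \<longrightarrow> t = \<infinity>" using g unfolding good_def by blast
    show "\<forall>x0\<in>N. \<forall>i\<in>N. \<forall>k k'. k \<noteq> k' \<longrightarrow> joint_prob Q (\<lambda>_. \<mu>) x0 i k k' = 0"
      using joint by blast
    show "\<forall>x0\<in>N. surv Q (\<lambda>_. \<mu>) x0 (card N) = 0" using good_surv_n[OF g] by blast
  qed
qed

end

theorem proposition2:
  fixes N :: "'a set" and E :: "('a \<times> 'a) set"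
    and w f :: real and Q R T S :: "'a \<times> 'a \<Rightarrow> real"
  assumes finN: "finite N"
    and E_sub: "E \<subseteq> N \<times> N"
    and loops: "\<forall>i\<in>N. (i, i) \<in> E"
    and connected: "\<forall>i\<in>N. \<forall>j\<in>N. (i, j) \<in> (E \<union> E\<inverse>)\<^sup>*"
    and w_pos: "w > 0" and f_pos: "f > 0"
    and Q_pos: "\<forall>e\<in>E. Q e > 0" and R_pos: "\<forall>e\<in>E. R e > 0"
    and T_pos: "\<forall>(i, j)\<in>E. i \<noteq> j \<longrightarrow> T (i, j) > 0"
    and S_pos: "\<forall>(i, j)\<in>E. i \<noteq> j \<longrightarrow> S (i, j) > 0"
    and S_loop: "\<forall>i\<in>N. S (i, i) = 0"
    and standing: "\<forall>(j, k)\<in>E. j \<noteq> k \<longrightarrow>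
          R (j, k) - w / Q (j, k) \<le> max (R (j, j) - w / Q (j, j)) (R (k, k) - w / Q (k, k))"
  shows "\<exists>\<mu> :: 'a \<Rightarrow> 'a act.
     (\<forall>i\<in>N. admissible E T i (\<mu> i)) \<and>
     (\<forall>\<pi>. (\<forall>k. \<forall>i\<in>N. admissible E T i (\<pi> k i)) \<longrightarrow>
          (\<forall>x\<in>N. policy_value w f Q R S \<pi> x \<le> policy_value w f Q R S (\<lambda>_. \<mu>) x)) \<and>
     (\<forall>i\<in>N. \<forall>t. \<mu> i = Move i t \<longrightarrow> t = \<infinity>) \<and>
     (\<forall>x0\<in>N. \<forall>i\<in>N. \<forall>k k'. k \<noteq> k' \<longrightarrow> joint_prob Q (\<lambda>_. \<mu>) x0 i k k' = 0) \<and>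
     (\<forall>x0\<in>N. surv Q (\<lambda>_. \<mu>) x0 (card N) = 0)"
  proof -
  interpret routing N E w f Q R T S
    by unfold_locales (fact finN E_sub loops w_pos f_pos Q_pos T_pos S_pos S_loop standing)+
  show ?thesis by (rule final)
qed

end
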